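(* Let $k$ be a positive semidefinite covariance kernel, $x_1,\dots,x_N\in\mathbb{R}^d$, and $K$ the $N\times N$ real symmetric positive semidefinite matrix with entries $K_{ij}=k(x_i,x_j)$. Let $\sigma>0$, $\varepsilon\ge0$, and let $\Phi\in\mathbb{C}^{N\times M}$ with $M<N$ be such that $\tilde K=\Phi\Phi^*$ satisfies $\|\tilde K-K\|\le N\varepsilon$. Let $A_{\mathrm{FS}}=\Phi\Phi^*+\sigma^2I_N$ and $A_{\mathrm{WS}}=\Phi^*\Phi+\sigma^2I_M$, with condition numbers $\kappa_{\mathrm{FS}}=\kappa(A_{\mathrm{FS}})$ and $\kappa_{\mathrm{WS}}=\kappa(A_{\mathrm{WS}})$. Then both satisfy \[ \kappa_{\mathrm{FS}},\ \kappa_{\mathrm{WS}}\;\le\;\left(1+\frac{\varepsilon N}{\sigma^2}\right)\kappa(K+\sigma^2I)+\frac{\varepsilon N}{\sigma^2}. \]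
   Context: $\Phi^*$ denotes the conjugate transpose of $\Phi$; $\|\cdot\|$ is the spectral norm; $\kappa(A)=\|A\|\,\|A^{-1}\|$. *)

theory Defs
  imports "HOL-Analysis.Analysis"
begin

text \<open>Positive semidefinite (covariance) kernel: symmetric, and every Gram matrix
  on finitely many points is positive semidefinite.\<close>
definition psd_kernel :: "('a \<Rightarrow> 'a \<Rightarrow> real) \<Rightarrow> bool" where
  "psd_kernel k \<longleftrightarrow> (\<forall>x y. k x y = k y x) \<and>
     (\<forall>(n::nat) (xs::nat \<Rightarrow> 'a) (c::nat \<Rightarrow> real).
        0 \<le> (\<Sum>i<n. \<Sum>j<n. c i * c j * k (xs i) (xs j)))"

text \<open>Conjugate transpose of a complex matrix.\<close>
definition cnj_transpose :: "complex^'m^'n \<Rightarrow> complex^'n^'m" where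
  "cnj_transpose A = (\<chi> i j. cnj (A $ j $ i))"

text \<open>Spectral norm = operator norm induced by the Euclidean norm.\<close>
definition spec_norm :: "complex^'m^'n \<Rightarrow> real" where
  "spec_norm A = onorm (\<lambda>v. A *v v)"

text \<open>Condition number.\<close>
definition cond_num :: "complex^'n^'n \<Rightarrow> real" where
  "cond_num A = spec_norm A * spec_norm (matrix_inv A)"

end

theory Submission
  imports Defs
begin


definition cinner :: "complex^'n \<Rightarrow> complex^'n \<Rightarrow> complex" where
  "cinner u v = (\<Sum>i\<in>UNIV. cnj (u$i) * v$i)"

lemma norm_sq_vec: "(norm (u::complex^'n))^2 = (\<Sum>i\<in>UNIV. (cmod (u$i))^2)"
  unfolding norm_vec_def L2_set_def by (simp add: sum_nonneg)

lemma re_cinner_self: "Re (cinner u u) = (norm u)^2"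
proof -
  have "Re (cinner u u) = (\<Sum>i\<in>UNIV. Re (cnj (u$i) * u$i))" unfolding cinner_def by simp
  also have "\<dots> = (\<Sum>i\<in>UNIV. (cmod (u$i))^2)"
    by (intro sum.cong refl) (simp add: cmod_power2, simp add: power2_eq_square)
  finally show ?thesis by (simp add: norm_sq_vec)
qed

lemma cinner_cs: "cmod (cinner u v) \<le> norm u * norm v"
proof -
  have "cmod (cinner u v) \<le> (\<Sum>i\<in>UNIV. cmod (cnj (u$i) * v$i))"
    unfolding cinner_def by (rule norm_sum)
  also have "\<dots> = (\<Sum>i\<in>UNIV. \<bar>cmod (u$i)\<bar> * \<bar>cmod (v$i)\<bar>)" by (simp add: norm_mult)
  also have "\<dots> \<le> L2_set (\<lambda>i. cmod (u$i)) UNIV * L2_set (\<lambda>i. cmod (v$i)) UNIV"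
    by (rule L2_set_mult_ineq)
  finally show ?thesis by (simp add: norm_vec_def)
qed

lemma re_cinner_le: "Re (cinner u v) \<le> norm u * norm v"
  using cinner_cs[of u v] abs_Re_le_cmod[of "cinner u v"] by linarith

lemma cinner_adj:
  fixes P :: "complex^'a^'b"
  shows "cinner u (P *v v) = cinner (cnj_transpose P *v u) v"
proof -
  have "cinner u (P *v v) = (\<Sum>i\<in>UNIV. \<Sum>j\<in>UNIV. cnj (u$i) * P$i$j * v$j)"
    unfolding cinner_def matrix_vector_mult_def by (simp add: sum_distrib_left mult.assoc)
  also have "\<dots> = (\<Sum>j\<in>UNIV. \<Sum>i\<in>UNIV. cnj (u$i) * P$i$j * v$j)" by (rule sum.swap)
  also have "\<dots> = cinner (cnj_transpose P *v u) v"
    unfolding cinner_def matrix_vector_mult_def cnj_transpose_def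
    by (simp add: cnj_sum sum_distrib_right sum_distrib_left mult.commute mult.left_commute)
  finally show ?thesis .
qed

lemma cnj_transpose_twice: "cnj_transpose (cnj_transpose A) = A"
  unfolding cnj_transpose_def by (simp add: vec_eq_iff)

lemma mat_mulv: "mat (complex_of_real r) *v v = r *\<^sub>R v"
proof -
  have "(\<Sum>j\<in>UNIV. (if i = j then complex_of_real r else 0) * v $ j) = complex_of_real r * v $ i" for i
  proof -
    have "(\<Sum>j\<in>UNIV. (if i = j then complex_of_real r else 0) * v $ j)
        = (\<Sum>j\<in>UNIV. (if i = j then complex_of_real r * v $ j else 0))"
      by (intro sum.cong refl) simp
    then show ?thesis by simp
  qed
  moreover have "(r *\<^sub>R v)$i = complex_of_real r * v$i" for i
    by (metis vector_scaleR_component scaleR_conv_of_real)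
  ultimately show ?thesis unfolding vec_eq_iff matrix_vector_mult_def mat_def
    by simp
qed

lemma onorm_le_mul: "norm ((A::complex^'a^'b) *v v) \<le> spec_norm A * norm v"
  unfolding spec_norm_def by (rule onorm) simp

lemma spec_norm_nonneg: "0 \<le> spec_norm (A::complex^'a^'b)"
  unfolding spec_norm_def by (rule onorm_pos_le) simp

lemma spec_norm_bound: "0 \<le> b \<Longrightarrow> (\<And>v. norm ((A::complex^'a^'b) *v v) \<le> b * norm v) \<Longrightarrow> spec_norm A \<le> b"
  unfolding spec_norm_def by (rule onorm_bound)

lemma spec_norm_add: "spec_norm ((A::complex^'a^'b) + B) \<le> spec_norm A + spec_norm B"
proof -
  have "(\<lambda>v. (A + B) *v v) = (\<lambda>v. A *v v + B *v v)" by (simp add: matrix_vector_mult_add_rdistrib)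
  then show ?thesis unfolding spec_norm_def using onorm_triangle[of "(*v) A" "(*v) B"] by simp
qed


lemma kernel_exists:
  fixes P :: "complex^'n^'m"
  assumes "CARD('m) < CARD('n)"
  shows "\<exists>v. v \<noteq> 0 \<and> P *v v = 0"
proof (rule ccontr)
  assume "\<not> ?thesis"
  then have "\<forall>x. P *v x = 0 \<longrightarrow> x = 0" by blast
  then have inj: "inj ((*v) P)"
    using matrix_left_invertible_ker matrix_left_invertible_injective by blast
  have ind: "vec.independent ((*v) P ` (cart_basis :: (complex^'n) set))"
    by (rule vec.linear_independent_injective_image[OF matrix_vector_mul_linear_gen vec.independent_Basis])
       (use inj in \<open>auto intro: inj_on_subset\<close>)
  have "card ((*v) P ` (cart_basis :: (complex^'n) set)) = CARD('n)"
    using card_image[OF inj_on_subset[OF inj]] card_cart_basis by (metis subset_UNIV)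
  moreover have "card ((*v) P ` (cart_basis :: (complex^'n) set)) \<le> vec.dim (UNIV :: (complex^'m) set)"
    by (rule vec.independent_card_le_dim[OF _ ind]) simp
  ultimately show False using assms vec_dim_card by (metis not_le)
qed


lemma cinner_add2: "cinner v (a + b) = cinner v a + cinner v b"
  unfolding cinner_def by (simp add: distrib_left sum.distrib)

lemma cinner_scaleR2: "cinner v (r *\<^sub>R b) = complex_of_real r * cinner v b"
proof -
  have "(r *\<^sub>R b)$i = complex_of_real r * b$i" for i
    by (metis vector_scaleR_component scaleR_conv_of_real)
  then show ?thesis unfolding cinner_def by (simp add: sum_distrib_left mult.left_commute)
qed

lemma cinner_zero2: "cinner v 0 = 0"
  unfolding cinner_def by simp

lemma gen_inv:
  fixes H :: "complex^'a^'a"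
  assumes c: "c > 0" and q: "\<And>v. c * (norm v)^2 \<le> Re (cinner v (H *v v))"
  shows "matrix_inv H ** H = mat 1" "H ** matrix_inv H = mat 1"
    "spec_norm (matrix_inv H) \<le> 1 / c"
proof -
  have "\<forall>x. H *v x = 0 \<longrightarrow> x = 0"
  proof (intro allI impI)
    fix x assume "H *v x = 0"
    then have "c * (norm x)^2 \<le> 0" using q[of x] by (simp add: cinner_zero2)
    then show "x = 0" using c by (simp add: mult_le_0_iff)
  qed
  then have "invertible H"
    using matrix_left_invertible_ker invertible_left_inverse by blast
  then have inv: "H ** matrix_inv H = mat 1 \<and> matrix_inv H ** H = mat 1"
    unfolding invertible_def matrix_inv_def by (rule someI_ex)
  then show "matrix_inv H ** H = mat 1" "H ** matrix_inv H = mat 1" by auto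
  show "spec_norm (matrix_inv H) \<le> 1 / c"
  proof (rule spec_norm_bound)
    show "0 \<le> 1 / c" using c by simp
    fix w
    define v where "v = matrix_inv H *v w"
    have Hv: "H *v v = w" unfolding v_def using inv by (simp add: matrix_vector_mul_assoc)
    have "c * (norm v)^2 \<le> norm v * norm w" using q[of v] re_cinner_le[of v w] Hv by simp
    moreover have "(c * norm v) * norm v = c * (norm v)^2" by (simp add: power2_eq_square)
    moreover have "norm w * norm v = norm v * norm w" by simp
    ultimately have "(c * norm v) * norm v \<le> norm w * norm v" by linarith
    then have "c * norm v \<le> norm w"
    proof (cases "norm v = 0")
      case True then show ?thesis by simp
    next
      case False then have "norm v > 0" by simp
      with \<open>(c * norm v) * norm v \<le> norm w * norm v\<close> show ?thesis by (metis mult_right_le_imp_le)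
    qed
    then show "norm (matrix_inv H *v w) \<le> 1 / c * norm w"
      using c unfolding v_def[symmetric] by (simp add: field_simps)
  qed
qed

lemma quad_gram:
  fixes \<Psi> :: "complex^'a^'b"
  shows "Re (cinner v ((\<Psi> ** cnj_transpose \<Psi> + mat (complex_of_real s)) *v v))
        = (norm (cnj_transpose \<Psi> *v v))^2 + s * (norm v)^2"
proof -
  have "(\<Psi> ** cnj_transpose \<Psi> + mat (complex_of_real s)) *v v = \<Psi> *v (cnj_transpose \<Psi> *v v) + s *\<^sub>R v"
    by (simp add: matrix_vector_mult_add_rdistrib matrix_vector_mul_assoc mat_mulv)
  moreover have "cinner v (\<Psi> *v (cnj_transpose \<Psi> *v v)) = cinner (cnj_transpose \<Psi> *v v) (cnj_transpose \<Psi> *v v)"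
    by (rule cinner_adj)
  ultimately show ?thesis
    by (simp add: cinner_add2 cinner_scaleR2 re_cinner_self)
qed

lemma psd_sum:
  fixes x :: "'n::finite \<Rightarrow> 'a" and a :: "'n \<Rightarrow> real"
  assumes "psd_kernel k"
  shows "0 \<le> (\<Sum>i\<in>UNIV. \<Sum>j\<in>UNIV. a i * a j * k (x i) (x j))"
proof -
  obtain h :: "nat \<Rightarrow> 'n" where h: "bij_betw h {..<card (UNIV::'n set)} UNIV"
  proof -
    from ex_bij_betw_nat_finite[of "UNIV::'n set"] obtain h :: "nat \<Rightarrow> 'n" where "bij_betw h {0..<card (UNIV::'n set)} UNIV" by auto
    moreover have "{0..<card (UNIV::'n set)} = {..<card (UNIV::'n set)}" by auto
    ultimately show ?thesis using that by metis
  qed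
  have "0 \<le> (\<Sum>i<card (UNIV::'n set). \<Sum>j<card (UNIV::'n set). a (h i) * a (h j) * k (x (h i)) (x (h j)))"
  proof -
    have P: "\<And>n (xs::nat \<Rightarrow> 'a) c. 0 \<le> (\<Sum>i<n. \<Sum>j<n. c i * c j * k (xs i) (xs j))"
      using assms unfolding psd_kernel_def by blast
    show ?thesis using P[where n="card (UNIV::'n set)" and xs="x \<circ> h" and c="a \<circ> h"] by simp
  qed
  also have "\<dots> = (\<Sum>i\<in>UNIV. \<Sum>j\<in>UNIV. a i * a j * k (x i) (x j))"
    using sum.reindex_bij_betw[OF h, of "\<lambda>i. \<Sum>j\<in>UNIV. a i * a j * k (x i) (x j)"]
          sum.reindex_bij_betw[OF h, of "\<lambda>j. a _ * a j * k (x _) (x j)"]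
    by simp
  finally show ?thesis .
qed

lemma quad_K:
  fixes x :: "'n::finite \<Rightarrow> 'a"
  assumes "psd_kernel k"
  shows "0 \<le> Re (cinner v ((\<chi> i j. complex_of_real (k (x i) (x j))) *v v))"
proof -
  have "Re (cinner v ((\<chi> i j. complex_of_real (k (x i) (x j))) *v v))
     = (\<Sum>i\<in>UNIV. \<Sum>j\<in>UNIV. Re (v$i) * Re (v$j) * k (x i) (x j))
     + (\<Sum>i\<in>UNIV. \<Sum>j\<in>UNIV. Im (v$i) * Im (v$j) * k (x i) (x j))"
  proof -
    have t: "Re (cnj a * (complex_of_real r * b)) = Re a * Re b * r + Im a * Im b * r" for a b r
      by (simp add: algebra_simps)
    show ?thesis
      unfolding cinner_def matrix_vector_mult_def
      by (simp add: sum_distrib_left t sum.distrib, simp add: mult_ac)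
  qed
  then show ?thesis
    using psd_sum[OF assms, of "\<lambda>i. Re (v$i)" x] psd_sum[OF assms, of "\<lambda>i. Im (v$i)" x] by simp
qed



theorem lemma5p4:
  fixes k :: "real^'d \<Rightarrow> real^'d \<Rightarrow> real"
    and x :: "'n::finite \<Rightarrow> real^'d"
    and \<Phi> :: "complex^'m::finite^'n"
    and \<sigma> \<epsilon> :: real
  assumes kern: "psd_kernel k"
    and sig: "\<sigma> > 0"
    and eps: "\<epsilon> \<ge> 0"
    and MN: "CARD('m) < CARD('n)"
    and approx: "spec_norm (\<Phi> ** cnj_transpose \<Phi> -
                   (\<chi> i j. complex_of_real (k (x i) (x j)))) \<le> real CARD('n) * \<epsilon>"
  shows "cond_num (\<Phi> ** cnj_transpose \<Phi> + mat (complex_of_real (\<sigma>\<^sup>2)))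
           \<le> (1 + \<epsilon> * real CARD('n) / \<sigma>\<^sup>2) *
              cond_num ((\<chi> i j. complex_of_real (k (x i) (x j))) + mat (complex_of_real (\<sigma>\<^sup>2)))
             + \<epsilon> * real CARD('n) / \<sigma>\<^sup>2
       \<and> cond_num (cnj_transpose \<Phi> ** \<Phi> + mat (complex_of_real (\<sigma>\<^sup>2)))
           \<le> (1 + \<epsilon> * real CARD('n) / \<sigma>\<^sup>2) *
              cond_num ((\<chi> i j. complex_of_real (k (x i) (x j))) + mat (complex_of_real (\<sigma>\<^sup>2)))
             + \<epsilon> * real CARD('n) / \<sigma>\<^sup>2"
proof -
  define K :: "complex^'n^'n" where "K = (\<chi> i j. complex_of_real (k (x i) (x j)))"
  define s where "s = \<sigma>\<^sup>2"
  define I :: "complex^'n^'n" where "I = mat (complex_of_real s)"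
  define I' :: "complex^'m^'m" where "I' = mat (complex_of_real s)"
  define A where "A = \<Phi> ** cnj_transpose \<Phi> + I"
  define A' where "A' = cnj_transpose \<Phi> ** \<Phi> + I'"
  define B where "B = K + I"
  define E where "E = \<Phi> ** cnj_transpose \<Phi> - K"
  define Ne where "Ne = real CARD('n) * \<epsilon>"
  define S where "S = spec_norm B + Ne"
  have s: "s > 0" unfolding s_def using sig by simp
  have Ne: "Ne \<ge> 0" unfolding Ne_def using eps by simp
  have E: "spec_norm E \<le> Ne" using approx unfolding E_def K_def Ne_def .
  obtain v0 :: "complex^'n" where v0: "v0 \<noteq> 0" "cnj_transpose \<Phi> *v v0 = 0"
    using kernel_exists[OF MN] by blast
  \<comment> \<open>A\<close>
  have qA: "Re (cinner v (A *v v)) = (norm (cnj_transpose \<Phi> *v v))^2 + s * (norm v)^2" for v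
    unfolding A_def I_def by (rule quad_gram)
  have invA: "spec_norm (matrix_inv A) \<le> 1 / s"
    by (rule gen_inv(3)[OF s]) (simp add: qA)
  have "A = B + E" unfolding A_def B_def E_def by (simp add: algebra_simps)
  then have nA: "spec_norm A \<le> S" unfolding S_def using spec_norm_add[of B E] E by simp
  have phis: "(norm (cnj_transpose \<Phi> *v v))^2 \<le> (S - s) * (norm v)^2" for v
  proof -
    have "Re (cinner v (A *v v)) \<le> norm v * norm (A *v v)" by (rule re_cinner_le)
    also have "\<dots> \<le> norm v * (spec_norm A * norm v)"
      by (rule mult_left_mono[OF onorm_le_mul]) simp
    also have "\<dots> \<le> norm v * (S * norm v)"
      by (intro mult_left_mono mult_right_mono nA) simp_all
    finally show ?thesis unfolding qA by (simp add: power2_eq_square algebra_simps)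
  qed
  have Ss: "S - s \<ge> 0"
  proof -
    have "0 \<le> (S - s) * (norm v0)^2" using phis[of v0] by (meson order_trans zero_le_power2)
    moreover have "(norm v0)^2 > 0" using v0 by simp
    ultimately show ?thesis by (simp add: zero_le_mult_iff)
  qed
  \<comment> \<open>A'\<close>
  have qA': "Re (cinner v (A' *v v)) = (norm (\<Phi> *v v))^2 + s * (norm v)^2" for v
    using quad_gram[where \<Psi>="cnj_transpose \<Phi>" and s=s and v=v] unfolding A'_def I'_def cnj_transpose_twice .
  have invA': "spec_norm (matrix_inv A') \<le> 1 / s"
    by (rule gen_inv(3)[OF s]) (simp add: qA')
  have nA': "spec_norm A' \<le> S"
  proof (rule spec_norm_bound)
    show "0 \<le> S" using Ss s by simp
    fix u :: "complex^'m"
    define w where "w = \<Phi> *v u"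
    define z where "z = cnj_transpose \<Phi> *v w"
    have z1: "(norm z)^2 \<le> (S - s) * (norm w)^2" unfolding z_def by (rule phis)
    have "(norm w)^2 = Re (cinner w w)" by (simp add: re_cinner_self)
    also have "cinner w w = cinner u z"
      unfolding z_def w_def using cinner_adj[of u "cnj_transpose \<Phi>"] by (simp add: cnj_transpose_twice)
    also have "Re (cinner u z) \<le> norm u * norm z" by (rule re_cinner_le)
    finally have z2: "(norm w)^2 \<le> norm u * norm z" .
    have "(norm z)^2 \<le> (S - s) * (norm u * norm z)"
      using z1 mult_left_mono[OF z2 Ss] by linarith
    then have zb: "norm z \<le> (S - s) * norm u"
    proof (cases "norm z = 0")
      case True then show ?thesis using Ss by simp
    next
      case False then have "norm z > 0" by simp
      moreover assume "(norm z)^2 \<le> (S - s) * (norm u * norm z)"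
      ultimately show ?thesis
        by (metis mult_right_le_imp_le power2_eq_square mult.assoc)
    qed
    have "A' *v u = z + s *\<^sub>R u" unfolding A'_def I'_def z_def w_def
      by (simp add: matrix_vector_mult_add_rdistrib matrix_vector_mul_assoc mat_mulv)
    then have "norm (A' *v u) \<le> norm z + s * norm u"
      using norm_triangle_ineq[of z "s *\<^sub>R u"] s by simp
    also have "\<dots> \<le> S * norm u" using zb by (simp add: algebra_simps)
    finally show "norm (A' *v u) \<le> S * norm u" .
  qed
  \<comment> \<open>B\<close>
  have qB: "s * (norm v)^2 \<le> Re (cinner v (B *v v))" for v
  proof -
    have "B *v v = K *v v + s *\<^sub>R v" unfolding B_def I_def
      by (simp add: matrix_vector_mult_add_rdistrib mat_mulv)
    then have "Re (cinner v (B *v v)) = Re (cinner v (K *v v)) + s * (norm v)^2"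
      by (simp add: cinner_add2 cinner_scaleR2 re_cinner_self)
    then show ?thesis using quad_K[OF kern, of v x] unfolding K_def by simp
  qed
  note invB = gen_inv[OF s qB]
  have Bv0: "norm (B *v v0) \<le> (Ne + s) * norm v0"
  proof -
    have "E *v v0 = - (K *v v0)" unfolding E_def
      by (simp add: matrix_vector_mult_diff_rdistrib matrix_vector_mul_assoc[symmetric] v0)
    then have "norm (K *v v0) \<le> Ne * norm v0"
      using onorm_le_mul[of E v0] E mult_right_mono[OF E, of "norm v0"] by simp
    moreover have "B *v v0 = K *v v0 + s *\<^sub>R v0" unfolding B_def I_def
      by (simp add: matrix_vector_mult_add_rdistrib mat_mulv)
    ultimately show ?thesis
      using norm_triangle_ineq[of "K *v v0" "s *\<^sub>R v0"] s by (simp add: algebra_simps)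
  qed
  have "norm v0 = norm (matrix_inv B *v (B *v v0))"
    by (simp add: matrix_vector_mul_assoc invB(1))
  also have "\<dots> \<le> spec_norm (matrix_inv B) * norm (B *v v0)" by (rule onorm_le_mul)
  also have "\<dots> \<le> spec_norm (matrix_inv B) * ((Ne + s) * norm v0)"
    by (rule mult_left_mono[OF Bv0 spec_norm_nonneg])
  finally have "1 * norm v0 \<le> (spec_norm (matrix_inv B) * (Ne + s)) * norm v0" by (simp add: mult_ac)
  then have invBl: "1 \<le> spec_norm (matrix_inv B) * (Ne + s)"
    using v0 mult_right_le_imp_le[of 1 "norm v0"] by simp
  have nB: "spec_norm B \<le> cond_num B * (Ne + s)"
    unfolding cond_num_def using mult_left_mono[OF invBl spec_norm_nonneg[of B]] by (simp add: mult_ac)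
  \<comment> \<open>final\<close>
  have fin: "cond_num X \<le> (1 + \<epsilon> * real CARD('n) / \<sigma>\<^sup>2) * cond_num B + \<epsilon> * real CARD('n) / \<sigma>\<^sup>2"
    if nX: "spec_norm X \<le> S" and iX: "spec_norm (matrix_inv X) \<le> 1 / s" for X :: "complex^'a^'a"
  proof -
    have "cond_num X \<le> S * (1 / s)"
      unfolding cond_num_def by (rule mult_mono[OF nX iX]) (use Ss s in \<open>simp_all add: spec_norm_nonneg\<close>)
    also have "\<dots> \<le> (cond_num B * (Ne + s) + Ne) / s" unfolding S_def using nB s
      by (simp add: divide_right_mono)
    also have "\<dots> = (1 + Ne / s) * cond_num B + Ne / s" using s by (simp add: field_simps)
    finally show ?thesis unfolding Ne_def s_def by (simp add: mult.commute)
  qed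
  show ?thesis
    using fin[OF nA invA] fin[OF nA' invA']
    unfolding A_def A'_def I_def I'_def B_def K_def s_def by simp
qed


end
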